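(* Let $f$ and $g$ be completely multiplicative functions with $|f(n)|,|g(n)|\le1$ for all $n$, where $S_f(x)=x^\alpha\xi(x)$ for some $\xi$ with $\xi(t)\ll_\epsilon t^\epsilon$ for every $\epsilon>0$, and where $\mathbb{D}_\beta(f,g)<\infty$ for some $0<\beta<2\alpha-1$. Let $h$ be defined by $g=f*h$. Then the Dirichlet series $L(s,h)=\sum_{n\ge1}h(n)n^{-s}$ is non-zero in the region $\Re(s)>(1+\beta)/2$.
   Context: $S_f(x):=\sum_{n\le x}f(n)$; $(f*h)(n)=\sum_{dm=n}f(d)h(m)$; $\mathbb{D}_\beta(f,g)^2:=\sum_p \frac{1-\Re(f(p)\overline{g(p)})}{p^\beta}$ (sum over primes). *)

theory Defs
  imports "HOL-Analysis.Analysis"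
begin

definition completely_multiplicative :: "(nat \<Rightarrow> complex) \<Rightarrow> bool" where
  "completely_multiplicative f \<longleftrightarrow>
     f 1 = 1 \<and> (\<forall>m n. m > 0 \<longrightarrow> n > 0 \<longrightarrow> f (m * n) = f m * f n)"

definition summatory :: "(nat \<Rightarrow> complex) \<Rightarrow> real \<Rightarrow> complex" where
  "summatory f x = (\<Sum>n\<in>{1..nat \<lfloor>x\<rfloor>}. f n)"

definition dconv :: "(nat \<Rightarrow> complex) \<Rightarrow> (nat \<Rightarrow> complex) \<Rightarrow> nat \<Rightarrow> complex" where
  "dconv f h n = (\<Sum>d | d dvd n. f d * h (n div d))"

text \<open>Summand of the pretentious distance D_beta(f,g)^2.\<close>
definition dist_term :: "real \<Rightarrow> (nat \<Rightarrow> complex) \<Rightarrow> (nat \<Rightarrow> complex) \<Rightarrow> nat \<Rightarrow> real" where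
  "dist_term \<beta> f g p = (1 - Re (f p * cnj (g p))) / real p powr \<beta>"

end

theory Submission
  imports Defs "HOL-Computational_Algebra.Primes" "HOL-Computational_Algebra.Formal_Power_Series"
begin



definition multf :: "(nat \<Rightarrow> 'a::comm_monoid_mult) \<Rightarrow> bool" where
  "multf F \<longleftrightarrow> F 1 = 1 \<and> (\<forall>m n. coprime m n \<longrightarrow> m > 0 \<longrightarrow> n > 0 \<longrightarrow> F (m * n) = F m * F n)"

lemma multf_prod:
  assumes F: "multf F" and P: "finite P" "\<And>p. p \<in> P \<Longrightarrow> prime p"
  shows "F (\<Prod>p\<in>P. p ^ e p) = (\<Prod>p\<in>P. F (p ^ e p))"
  using P
proof (induction P rule: finite_induct)
  case empty
  then show ?case using F by (simp add: multf_def)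
next
  case (insert q P)
  have cop: "coprime (q ^ e q) (\<Prod>p\<in>P. p ^ e p)"
  proof (rule prod_coprime_right)
    fix i assume "i \<in> P"
    then have "coprime q i" using insert by (metis insertCI primes_coprime)
    then show "coprime (q ^ e q) (i ^ e i)" by simp
  qed
  have pos1: "q ^ e q > 0" using insert by (simp add: prime_gt_0_nat)
  have pos2: "(\<Prod>p\<in>P. p ^ e p) > 0" using insert
    by (metis (no_types, lifting) insertCI prime_gt_0_nat prod_pos zero_less_power)
  show ?case using insert F cop pos1 pos2 by (simp add: multf_def)
qed

lemma multf_factor:
  assumes F: "multf F" and n: "n > 0"
  shows "F n = (\<Prod>p\<in>prime_factors n. F (p ^ multiplicity p n))"
proof -
  have "F n = F (\<Prod>p\<in>prime_factors n. p ^ multiplicity p n)"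
    using prime_factorization_nat[OF n] by simp
  also have "\<dots> = (\<Prod>p\<in>prime_factors n. F (p ^ multiplicity p n))"
    by (rule multf_prod[OF F]) auto
  finally show ?thesis .
qed

lemma multf_eq:
  assumes "multf F" "multf G" "\<And>p k. prime p \<Longrightarrow> F (p ^ k) = G (p ^ k)" "n > 0"
  shows "F n = G n"
  using multf_factor[OF assms(1,4)] multf_factor[OF assms(2,4)] assms(3)
  by (metis (no_types, lifting) in_prime_factors_imp_prime prod.cong)

lemma dconv_pp:
  assumes p: "prime p"
  shows "dconv F G (p ^ k) = (\<Sum>i\<le>k. F (p ^ i) * G (p ^ (k - i)))"
proof -
  have p1: "p > 1" using p prime_gt_1_nat by blast
  have set: "{d. d dvd p ^ k} = (\<lambda>i. p ^ i) ` {..k}"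
    using divides_primepow_nat[OF p] by auto
  have inj: "inj_on (\<lambda>i. p ^ i) {..k}"
    using p1 by (simp add: inj_on_def power_inject_exp)
  have "dconv F G (p ^ k) = (\<Sum>i\<le>k. F (p ^ i) * G (p ^ k div p ^ i))"
    unfolding dconv_def set by (simp add: sum.reindex[OF inj])
  also have "\<dots> = (\<Sum>i\<le>k. F (p ^ i) * G (p ^ (k - i)))"
    using p1 by (intro sum.cong refl) (simp add: power_diff)
  finally show ?thesis .
qed

lemma dconv_multf:
  fixes F G :: "nat \<Rightarrow> complex"
  assumes F: "multf F" and G: "multf G"
  shows "multf (dconv F G)"
  unfolding multf_def
proof (intro conjI allI impI)
  show "dconv F G 1 = 1" using F G by (simp add: dconv_def multf_def)
next
  fix m n :: nat assume cop: "coprime m n" and m: "m > 0" and n: "n > 0"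
  define D where "D = (\<lambda>x::nat. {d. d dvd x})"
  have fin: "finite (D m)" "finite (D n)" using m n unfolding D_def by (simp_all add: finite_divisors_nat)
  have set: "D (m * n) = (\<lambda>(a, b). a * b) ` (D m \<times> D n)"
  proof
    show "D (m * n) \<subseteq> (\<lambda>(a, b). a * b) ` (D m \<times> D n)"
    proof
      fix d assume "d \<in> D (m * n)"
      then have "d dvd m * n" by (simp add: D_def)
      then obtain a b where "d = a * b" "a dvd m" "b dvd n" by (rule dvd_productE)
      then show "d \<in> (\<lambda>(a, b). a * b) ` (D m \<times> D n)" by (auto simp: D_def)
    qed
    show "(\<lambda>(a, b). a * b) ` (D m \<times> D n) \<subseteq> D (m * n)"
      by (auto simp: D_def mult_dvd_mono)
  qed
  have inj: "inj_on (\<lambda>(a, b). a * b) (D m \<times> D n)"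
  proof (rule inj_onI, clarsimp)
    fix a b a' b' assume "a \<in> D m" "b \<in> D n" "a' \<in> D m" "b' \<in> D n" and eq: "a * b = a' * b'"
    then have "a dvd m" "b dvd n" "a' dvd m" "b' dvd n" by (auto simp: D_def)
    then have c1: "coprime a b'" and c2: "coprime a' b" using cop
      by (metis coprime_divisors)+
    have "a dvd a' * b'" using eq by (metis dvd_triv_left)
    then have d1: "a dvd a'" using c1 by (simp add: coprime_dvd_mult_left_iff)
    have "a' dvd a * b" using eq by (metis dvd_triv_left)
    then have d2: "a' dvd a" using c2 by (simp add: coprime_dvd_mult_left_iff)
    have "a = a'" using d1 d2 by (rule dvd_antisym)
    moreover have "a \<noteq> 0" using \<open>a dvd m\<close> m by auto
    ultimately show "a = a' \<and> b = b'" using eq by auto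
  qed
  have "dconv F G (m * n) = (\<Sum>d\<in>D (m * n). F d * G ((m * n) div d))"
    by (simp add: dconv_def D_def)
  also have "\<dots> = (\<Sum>(a, b)\<in>D m \<times> D n. F (a * b) * G ((m * n) div (a * b)))"
    unfolding set by (subst sum.reindex[OF inj]) (simp add: case_prod_unfold)
  also have "\<dots> = (\<Sum>(a, b)\<in>D m \<times> D n. (F a * G (m div a)) * (F b * G (n div b)))"
  proof (intro sum.cong refl, clarsimp)
    fix a b assume a: "a \<in> D m" and b: "b \<in> D n"
    then have ad: "a dvd m" and bd: "b dvd n" by (auto simp: D_def)
    have ab: "coprime a b" using cop ad bd by (metis coprime_divisors)
    have cab: "coprime (m div a) (n div b)" using cop ad bd by fastforce
    have apos: "a > 0" "b > 0" using ad bd m n by (auto intro: dvd_pos_nat)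
    have mpos: "m div a > 0" "n div b > 0" using ad bd m n by (auto elim!: dvdE)
    have div: "(m * n) div (a * b) = (m div a) * (n div b)"
      using ad bd by (metis div_mult_div_if_dvd)
    show "F (a * b) * G (m * n div (a * b)) = F a * G (m div a) * (F b * G (n div b))"
    proof -
      have "F (a * b) = F a * F b" using F ab apos unfolding multf_def by blast
      moreover have "G (m div a * (n div b)) = G (m div a) * G (n div b)"
        using G cab mpos unfolding multf_def by blast
      ultimately show ?thesis using div by simp
    qed
  qed
  also have "\<dots> = (\<Sum>a\<in>D m. F a * G (m div a)) * (\<Sum>b\<in>D n. F b * G (n div b))"
    by (simp add: sum_product sum.cartesian_product case_prod_unfold)
  also have "\<dots> = dconv F G m * dconv F G n" by (simp add: dconv_def D_def)
  finally show "dconv F G (m * n) = dconv F G m * dconv F G n" .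
qed




definition mkH :: "(nat \<Rightarrow> complex) \<Rightarrow> (nat \<Rightarrow> complex) \<Rightarrow> nat \<Rightarrow> complex" where
  "mkH a c n = (\<Prod>p\<in>prime_factors n. a p * c p ^ (multiplicity p n - 1))"

lemma mkH_multf: "multf (mkH a c)"
  unfolding multf_def
proof (intro conjI allI impI)
  show "mkH a c 1 = 1" by (simp add: mkH_def)
next
  fix m n :: nat assume cop: "coprime m n" and m: "m > 0" and n: "n > 0"
  have un: "prime_factors (m * n) = prime_factors m \<union> prime_factors n"
    using m n by (simp add: prime_factors_product)
  have disj: "prime_factors m \<inter> prime_factors n = {}"
  proof (rule ccontr)
    assume "prime_factors m \<inter> prime_factors n \<noteq> {}"
    then obtain p where "p \<in> prime_factors m" "p \<in> prime_factors n" by blast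
    then have "prime p" "p dvd m" "p dvd n" by auto
    then show False using cop by (metis coprime_common_divisor not_prime_unit)
  qed
  have mm: "multiplicity p (m * n) = multiplicity p m" if "p \<in> prime_factors m" for p
  proof -
    have "prime p" using that by auto
    moreover have "\<not> p dvd n" using that disj n by (auto simp: in_prime_factors_iff)
    ultimately show ?thesis using m n
      by (simp add: prime_elem_multiplicity_mult_distrib not_dvd_imp_multiplicity_0)
  qed
  have nn: "multiplicity p (m * n) = multiplicity p n" if "p \<in> prime_factors n" for p
  proof -
    have "prime p" using that by auto
    moreover have "\<not> p dvd m" using that disj m by (auto simp: in_prime_factors_iff)
    ultimately show ?thesis using m n
      by (simp add: prime_elem_multiplicity_mult_distrib not_dvd_imp_multiplicity_0)
  qed
  have "mkH a c (m * n) = (\<Prod>p\<in>prime_factors m. a p * c p ^ (multiplicity p (m * n) - 1)) *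
           (\<Prod>p\<in>prime_factors n. a p * c p ^ (multiplicity p (m * n) - 1))"
    unfolding mkH_def un by (rule prod.union_disjoint) (auto simp: disj)
  also have "\<dots> = mkH a c m * mkH a c n"
    unfolding mkH_def using mm nn by (simp cong: prod.cong)
  finally show "mkH a c (m * n) = mkH a c m * mkH a c n" .
qed

lemma mkH_pp:
  assumes "prime p"
  shows "mkH a c (p ^ k) = (if k = 0 then 1 else a p * c p ^ (k - 1))"
proof (cases "k = 0")
  case True then show ?thesis by (simp add: mkH_def)
next
  case False
  have "prime_factors (p ^ k) = {p}"
  proof (intro equalityI subsetI)
    fix q assume "q \<in> prime_factors (p ^ k)"
    then have "prime q" "q dvd p ^ k" by (auto simp: in_prime_factors_iff)
    then show "q \<in> {p}" using assms by (metis prime_dvd_power primes_dvd_imp_eq singletonI)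
  next
    fix q assume "q \<in> {p}"
    then show "q \<in> prime_factors (p ^ k)" using assms False
      by (auto simp: in_prime_factors_iff prime_gt_0_nat)
  qed
  then show ?thesis using assms False by (simp add: mkH_def multiplicity_prime_power)
qed

lemma cm_pow:
  assumes "completely_multiplicative f" "p > 0"
  shows "f (p ^ k) = f p ^ k"
  using assms by (induction k) (auto simp: completely_multiplicative_def)

lemma cm_multf: "completely_multiplicative f \<Longrightarrow> multf f"
  by (simp add: completely_multiplicative_def multf_def)

definition loc :: "complex \<Rightarrow> complex \<Rightarrow> nat \<Rightarrow> complex" where
  "loc x y j = (if j = 0 then 1 else (y - x) * y ^ (j - 1))"

lemma loc_L1: "(\<Sum>i\<le>k. x ^ i * loc x y (k - i)) = y ^ k"
proof (induction k)
  case 0 then show ?case by (simp add: loc_def)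
next
  case (Suc k)
  have "(\<Sum>i\<le>Suc k. x ^ i * loc x y (Suc k - i)) =
        loc x y (Suc k) + (\<Sum>i\<le>k. x ^ Suc i * loc x y (Suc k - Suc i))"
    by (subst sum.atMost_Suc_shift) simp
  also have "(\<Sum>i\<le>k. x ^ Suc i * loc x y (Suc k - Suc i)) = x * (\<Sum>i\<le>k. x ^ i * loc x y (k - i))"
    by (simp add: sum_distrib_left mult.assoc)
  also have "\<dots> = x * y ^ k" using Suc by simp
  finally show ?case by (simp add: loc_def algebra_simps)
qed

lemma loc_fps: "(1 - fps_const y * fps_X) * Abs_fps (loc x y) = 1 - fps_const x * fps_X"
proof (rule fps_ext)
  fix n
  show "fps_nth ((1 - fps_const y * fps_X) * Abs_fps (loc x y)) n = fps_nth (1 - fps_const x * fps_X) n"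
  proof (cases n)
    case 0 then show ?thesis by (simp add: loc_def algebra_simps fps_mult_nth_0)
  next
    case (Suc m)
    have "fps_nth ((1 - fps_const y * fps_X) * Abs_fps (loc x y)) n =
          loc x y n - y * loc x y m"
      using Suc by (simp add: algebra_simps mult.assoc fps_X_mult_nth)
    then show ?thesis using Suc
      by (cases m) (auto simp: loc_def algebra_simps fps_X_mult_nth)
  qed
qed

lemma loc_L2: "(\<Sum>i\<le>k. loc x y i * loc y x (k - i)) = (if k = 0 then 1 else 0)"
proof -
  define U where "U = Abs_fps (loc x y)"
  define W where "W = Abs_fps (loc y x)"
  have U: "(1 - fps_const y * fps_X) * U = 1 - fps_const x * fps_X" unfolding U_def by (rule loc_fps)
  have W: "(1 - fps_const x * fps_X) * W = 1 - fps_const y * fps_X" unfolding W_def by (rule loc_fps)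
  have nz: "(1 - fps_const y * fps_X) * (1 - fps_const x * fps_X) \<noteq> (0 :: complex fps)"
  proof
    assume "(1 - fps_const y * fps_X) * (1 - fps_const x * fps_X) = (0 :: complex fps)"
    then have "fps_nth ((1 - fps_const y * fps_X) * (1 - fps_const x * fps_X)) 0 = 0" by simp
    then show False by (simp add: fps_mult_nth_0)
  qed
  have "((1 - fps_const y * fps_X) * (1 - fps_const x * fps_X)) * (U * W) =
        ((1 - fps_const y * fps_X) * (1 - fps_const x * fps_X)) * 1"
  proof -
    have "((1 - fps_const y * fps_X) * (1 - fps_const x * fps_X)) * (U * W) =
          ((1 - fps_const y * fps_X) * U) * ((1 - fps_const x * fps_X) * W)"
      by (simp only: ac_simps)
    also have "\<dots> = (1 - fps_const x * fps_X) * (1 - fps_const y * fps_X)" by (simp only: U W)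
    finally show ?thesis by (simp add: ac_simps)
  qed
  then have "U * W = 1" using nz by (rule mult_left_cancel[THEN iffD1, rotated])
  then have "fps_nth (U * W) k = fps_nth 1 k" by simp
  then show ?thesis unfolding fps_mult_nth U_def W_def by (simp add: atLeast0AtMost)
qed




lemma conv_fH:
  assumes f: "completely_multiplicative f" and g: "completely_multiplicative g" and n: "n > 0"
  shows "dconv f (mkH (\<lambda>p. g p - f p) g) n = g n"
proof (rule multf_eq[OF dconv_multf[OF cm_multf[OF f] mkH_multf] cm_multf[OF g] _ n])
  fix p k :: nat assume p: "prime p"
  then have p0: "p > 0" by (simp add: prime_gt_0_nat)
  have "dconv f (mkH (\<lambda>p. g p - f p) g) (p ^ k) =
        (\<Sum>i\<le>k. f (p ^ i) * mkH (\<lambda>p. g p - f p) g (p ^ (k - i)))" by (rule dconv_pp[OF p])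
  also have "\<dots> = (\<Sum>i\<le>k. f p ^ i * loc (f p) (g p) (k - i))"
    using p p0 by (intro sum.cong refl) (simp add: mkH_pp cm_pow[OF f] loc_def)
  also have "\<dots> = g p ^ k" by (rule loc_L1)
  also have "\<dots> = g (p ^ k)" using cm_pow[OF g p0] by simp
  finally show "dconv f (mkH (\<lambda>p. g p - f p) g) (p ^ k) = g (p ^ k)" .
qed

definition delta :: "nat \<Rightarrow> complex" where "delta n = (if n = 1 then 1 else 0)"

lemma delta_multf: "multf delta"
  by (auto simp: multf_def delta_def)

lemma conv_HK:
  assumes n: "n > 0"
  shows "dconv (mkH (\<lambda>p. g p - f p) g) (mkH (\<lambda>p. f p - g p) f) n = delta n"
proof (rule multf_eq[OF dconv_multf[OF mkH_multf mkH_multf] delta_multf _ n])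
  fix p k :: nat assume p: "prime p"
  then have p1: "p > 1" using prime_gt_1_nat by blast
  have "dconv (mkH (\<lambda>p. g p - f p) g) (mkH (\<lambda>p. f p - g p) f) (p ^ k) =
        (\<Sum>i\<le>k. mkH (\<lambda>p. g p - f p) g (p ^ i) * mkH (\<lambda>p. f p - g p) f (p ^ (k - i)))"
    by (rule dconv_pp[OF p])
  also have "\<dots> = (\<Sum>i\<le>k. loc (f p) (g p) i * loc (g p) (f p) (k - i))"
    using p by (intro sum.cong refl) (simp add: mkH_pp loc_def)
  also have "\<dots> = (if k = 0 then 1 else 0)" by (rule loc_L2)
  also have "\<dots> = delta (p ^ k)" using p1 by (simp add: delta_def)
  finally show "dconv (mkH (\<lambda>p. g p - f p) g) (mkH (\<lambda>p. f p - g p) f) (p ^ k) = delta (p ^ k)" .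
qed

lemma dconv_unique:
  assumes F1: "F 1 = 1" and eq: "\<And>n. n > 0 \<Longrightarrow> dconv F X n = dconv F Y n" and n: "n > 0"
  shows "X n = Y n"
  using n
proof (induction n rule: less_induct)
  case (less n)
  define D where "D = {d. d dvd n} - {1}"
  have fin: "finite {d. d dvd n}" using less.prems by (simp add: finite_divisors_nat)
  have split: "dconv F Z n = Z n + (\<Sum>d\<in>D. F d * Z (n div d))" for Z
  proof -
    have "dconv F Z n = F 1 * Z (n div 1) + (\<Sum>d\<in>D. F d * Z (n div d))"
      unfolding dconv_def D_def by (rule sum.remove[OF fin]) simp
    then show ?thesis using F1 by simp
  qed
  have "(\<Sum>d\<in>D. F d * X (n div d)) = (\<Sum>d\<in>D. F d * Y (n div d))"
  proof (intro sum.cong refl)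
    fix d assume "d \<in> D"
    then have d: "d dvd n" "d \<noteq> 1" by (auto simp: D_def)
    then have "d > 1" using less.prems by (metis dvd_0_left_iff gr0_implies_Suc less_one linorder_neqE_nat neq0_conv)
    moreover have "n div d > 0" using less.prems d by (auto elim!: dvdE)
    ultimately have "n div d < n" "n div d > 0" using less.prems
      by (auto intro: div_less_dividend)
    then show "F d * X (n div d) = F d * Y (n div d)" using less.IH by simp
  qed
  then show ?case using eq[OF less.prems] split[of X] split[of Y] by simp
qed




lemma smooth_bound:
  fixes A B :: "nat \<Rightarrow> real"
  assumes A0: "\<And>n. A n \<ge> 0" and A1: "A 1 = 1"
    and Am: "\<And>m n. coprime m n \<Longrightarrow> m > 0 \<Longrightarrow> n > 0 \<Longrightarrow> A (m * n) = A m * A n"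
    and loc: "\<And>p K. prime p \<Longrightarrow> (\<Sum>k\<le>K. A (p ^ k)) \<le> B p"
  shows "finite Q \<Longrightarrow> (\<forall>q\<in>Q. prime q) \<Longrightarrow> finite X \<Longrightarrow>
         (\<forall>n\<in>X. n > 0 \<and> prime_factors n \<subseteq> Q) \<Longrightarrow> sum A X \<le> prod B Q"
proof (induction Q arbitrary: X rule: finite_induct)
  case empty
  have "X \<subseteq> {1}"
  proof
    fix n assume "n \<in> X"
    then have "n > 0" "prime_factors n = {}" using empty by auto
    then have "n = 1" using prime_factorization_nat[of n] by simp
    then show "n \<in> {1}" by simp
  qed
  then have "sum A X \<le> sum A {1}" by (intro sum_mono2) (auto simp: A0)
  then show ?case using A1 by simp
next
  case (insert q Q)
  have q: "prime q" using insert.prems by simp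
  have q1: "q > 1" using q prime_gt_1_nat by blast
  define v where "v n = multiplicity q n" for n
  define r where "r n = n div q ^ v n" for n
  have dec: "n = q ^ v n * r n" if "n \<in> X" for n
    unfolding r_def v_def by (simp add: multiplicity_dvd)
  have ndvd: "\<not> q dvd r n" if "n \<in> X" for n
  proof -
    have "n \<noteq> 0" using that insert.prems by auto
    moreover have "\<not> is_unit q" using q by (metis not_prime_unit)
    ultimately show ?thesis unfolding r_def v_def by (rule multiplicity_decompose)
  qed
  have rpos: "r n > 0" if "n \<in> X" for n
    using dec[OF that] insert.prems that by (metis gr0I mult_0_right)
  have rpf: "prime_factors (r n) \<subseteq> Q" if "n \<in> X" for n
  proof
    fix p assume p: "p \<in> prime_factors (r n)"
    then have "prime p" "p dvd r n" by (auto simp: in_prime_factors_iff)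
    then have "p dvd n" using dec[OF that] by (metis dvd_mult2 mult.commute)
    then have "p \<in> prime_factors n" using insert.prems that \<open>prime p\<close>
      by (auto simp: in_prime_factors_iff)
    then have "p \<in> insert q Q" using insert.prems that by blast
    moreover have "p \<noteq> q" using ndvd[OF that] \<open>p dvd r n\<close> by auto
    ultimately show "p \<in> Q" by simp
  qed
  have Adec: "A n = A (q ^ v n) * A (r n)" if "n \<in> X" for n
  proof -
    have "coprime q (r n)" using ndvd[OF that] q by (simp add: prime_imp_coprime)
    then have "coprime (q ^ v n) (r n)" by simp
    then have "A (q ^ v n * r n) = A (q ^ v n) * A (r n)"
      using rpos[OF that] q1 by (intro Am) auto
    then show ?thesis using dec[OF that] by simp
  qed
  define \<phi> where "\<phi> n = (v n, r n)" for n
  have inj: "inj_on \<phi> X"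
  proof (rule inj_onI)
    fix m n assume "m \<in> X" "n \<in> X" "\<phi> m = \<phi> n"
    then show "m = n" using dec[of m] dec[of n] by (simp add: \<phi>_def)
  qed
  define K where "K = Max (v ` X)"
  define Y where "Y = r ` X"
  have finY: "finite Y" using insert.prems by (simp add: Y_def)
  have sub: "\<phi> ` X \<subseteq> {..K} \<times> Y"
    using insert.prems by (auto simp: \<phi>_def K_def Y_def)
  have "sum A X = (\<Sum>n\<in>X. A (q ^ v n) * A (r n))" by (rule sum.cong) (auto simp: Adec)
  also have "\<dots> = (\<Sum>x\<in>\<phi> ` X. A (q ^ fst x) * A (snd x))"
    by (subst sum.reindex[OF inj]) (simp add: \<phi>_def)
  also have "\<dots> \<le> (\<Sum>x\<in>{..K} \<times> Y. A (q ^ fst x) * A (snd x))"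
    using sub finY by (intro sum_mono2) (auto simp: A0)
  also have "\<dots> = (\<Sum>k\<le>K. A (q ^ k)) * sum A Y"
    by (simp add: sum_product sum.cartesian_product case_prod_unfold)
  also have "\<dots> \<le> B q * prod B Q"
  proof (rule mult_mono)
    show "(\<Sum>k\<le>K. A (q ^ k)) \<le> B q" using loc q by blast
    show "sum A Y \<le> prod B Q" using insert.IH[of Y] insert.prems finY rpos rpf
      by (auto simp: Y_def)
    show "0 \<le> B q" using loc[OF q, of 0] A1 by simp
    show "0 \<le> sum A Y" by (simp add: A0 sum_nonneg)
  qed
  also have "\<dots> = prod B (insert q Q)" using insert.hyps by simp
  finally show ?case .
qed




lemma powr_pow_nat: "(x::real) \<ge> 0 \<Longrightarrow> (x ^ n) powr s = (x powr s) ^ n"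
  by (induction n) (auto simp: powr_mult)

lemma local_geom:
  fixes x y :: "nat \<Rightarrow> complex" and \<sigma> :: real
  assumes \<sigma>: "\<sigma> > 0" and p: "prime p" and yb: "cmod (y p) \<le> 1"
  shows "(\<Sum>k\<le>K. cmod (mkH (\<lambda>p. y p - x p) y (p ^ k)) / real (p ^ k) powr \<sigma>)
           \<le> 1 + (1 / (1 - 2 powr - \<sigma>)) * (cmod (y p - x p) * real p powr - \<sigma>)"
proof -
  define a where "a = cmod (y p - x p)"
  define r where "r = real p powr - \<sigma>"
  define c where "c = (2::real) powr - \<sigma>"
  have p2: "real p \<ge> 2" using p prime_ge_2_nat by auto
  have r0: "r > 0" unfolding r_def using p2 by simp
  have rc: "r \<le> c" unfolding r_def c_def using p2 \<sigma> by (intro powr_mono2') auto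
  have c1: "c < 1" unfolding c_def using \<sigma> by (simp add: powr_less_one)
  have a0: "a \<ge> 0" by (simp add: a_def)
  have trm: "cmod (mkH (\<lambda>p. y p - x p) y (p ^ Suc k)) / real (p ^ Suc k) powr \<sigma> \<le> a * r ^ Suc k" for k
  proof -
    have "mkH (\<lambda>p. y p - x p) y (p ^ Suc k) = (y p - x p) * y p ^ k"
      using mkH_pp[OF p, of "\<lambda>p. y p - x p" y "Suc k"] by simp
    then have "cmod (mkH (\<lambda>p. y p - x p) y (p ^ Suc k)) = a * cmod (y p) ^ k"
      by (simp add: a_def norm_mult norm_power)
    also have "\<dots> \<le> a * 1" using yb a0 by (intro mult_left_mono power_le_one) auto
    finally have le: "cmod (mkH (\<lambda>p. y p - x p) y (p ^ Suc k)) \<le> a" by simp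
    have pw: "real (p ^ Suc k) powr \<sigma> = (real p powr \<sigma>) ^ Suc k"
      by (simp only: of_nat_power powr_pow_nat of_nat_0_le_iff)
    have rr: "r ^ Suc k = 1 / (real p powr \<sigma>) ^ Suc k"
      unfolding r_def by (simp add: powr_minus power_inverse divide_inverse)
    have pos: "(real p powr \<sigma>) ^ Suc k > 0" using p2 by simp
    show ?thesis unfolding pw rr using le pos by (simp add: divide_right_mono)
  qed
  have "(\<Sum>k\<le>K. cmod (mkH (\<lambda>p. y p - x p) y (p ^ k)) / real (p ^ k) powr \<sigma>) =
        1 + (\<Sum>k<K. cmod (mkH (\<lambda>p. y p - x p) y (p ^ Suc k)) / real (p ^ Suc k) powr \<sigma>)"
    by (subst sum.atMost_shift) (simp add: mkH_def)
  also have "\<dots> \<le> 1 + (\<Sum>k<K. a * r ^ Suc k)"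
    using trm by (intro add_left_mono sum_mono) auto
  also have "(\<Sum>k<K. a * r ^ Suc k) = a * r * (\<Sum>k<K. r ^ k)"
    by (simp add: sum_distrib_left mult.assoc)
  also have "(\<Sum>k<K. r ^ k) \<le> 1 / (1 - c)"
  proof -
    have "(\<Sum>k<K. r ^ k) = (1 - r ^ K) / (1 - r)" using rc c1 by (simp add: sum_gp_strict)
    also have "\<dots> \<le> 1 / (1 - r)" using rc c1 r0 by (intro divide_right_mono) auto
    also have "\<dots> \<le> 1 / (1 - c)" using rc c1 by (intro divide_left_mono) auto
    finally show ?thesis .
  qed
  then have "a * r * (\<Sum>k<K. r ^ k) \<le> a * r * (1 / (1 - c))"
    using a0 r0 by (intro mult_left_mono) auto
  finally show ?thesis by (simp add: a_def r_def c_def algebra_simps)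
qed




lemma norm_div_powr:
  assumes "n > 0"
  shows "norm (z / of_nat n powr s) = cmod z / real n powr Re s"
proof -
  have "cmod (of_nat n powr s) = Re (of_nat n) powr Re s"
    by (rule norm_powr_real_powr) auto
  then show ?thesis by (simp add: norm_divide)
qed

lemma mkH_abs_summable:
  fixes x y :: "nat \<Rightarrow> complex" and s :: complex
  assumes \<sigma>: "Re s > 0" and yb: "\<And>p. prime p \<Longrightarrow> cmod (y p) \<le> 1"
    and T: "(\<lambda>p. cmod (y p - x p) * real p powr - Re s) summable_on {p. prime p}"
  shows "(\<lambda>n. norm (mkH (\<lambda>p. y p - x p) y n / of_nat n powr s)) summable_on {1..}"
proof -
  define \<sigma> where "\<sigma> = Re s"
  define A where "A n = cmod (mkH (\<lambda>p. y p - x p) y n) / real n powr \<sigma>" for n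
  define Tf where "Tf p = cmod (y p - x p) * real p powr - \<sigma>" for p
  define C where "C = 1 / (1 - 2 powr - \<sigma>)"
  define S where "S = infsum Tf {p. prime p}"
  have C0: "C \<ge> 0" unfolding C_def using \<sigma> by (simp add: \<sigma>_def powr_less_one less_imp_le)
  have T0: "Tf p \<ge> 0" for p by (simp add: Tf_def)
  have A0: "A n \<ge> 0" for n by (simp add: A_def)
  have A1: "A 1 = 1" by (simp add: A_def mkH_def)
  have Am: "A (m * n) = A m * A n" if "coprime m n" "m > 0" "n > 0" for m n
  proof -
    have "mkH (\<lambda>p. y p - x p) y (m * n) = mkH (\<lambda>p. y p - x p) y m * mkH (\<lambda>p. y p - x p) y n"
      using mkH_multf that unfolding multf_def by blast
    moreover have "real (m * n) powr \<sigma> = real m powr \<sigma> * real n powr \<sigma>"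
      by (simp add: powr_mult)
    ultimately show ?thesis by (simp add: A_def norm_mult)
  qed
  have loc: "(\<Sum>k\<le>K. A (p ^ k)) \<le> 1 + C * Tf p" if "prime p" for p K
    unfolding A_def C_def Tf_def using local_geom[where \<sigma>=\<sigma> and p=p and y=y and K=K and x=x] \<sigma> that yb[OF that]
    by (simp add: \<sigma>_def)
  have Tsum: "Tf summable_on {p. prime p}" using T unfolding Tf_def[abs_def] \<sigma>_def .
  have Asum: "A summable_on {1..}"
  proof (rule nonneg_bdd_above_summable_on)
    show "bdd_above (sum A ` {F. F \<subseteq> {1..} \<and> finite F})"
    proof (rule bdd_aboveI2)
      fix F :: "nat set" assume "F \<in> {F. F \<subseteq> {1..} \<and> finite F}"
      then have F: "F \<subseteq> {1..}" "finite F" by auto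
      define Q where "Q = (\<Union>n\<in>F. prime_factors n)"
      have Qfin: "finite Q" unfolding Q_def using F by auto
      have Qp: "\<forall>q\<in>Q. prime q" unfolding Q_def by auto
      have Fp: "\<forall>n\<in>F. n > 0 \<and> prime_factors n \<subseteq> Q" using F unfolding Q_def by auto
      have "sum A F \<le> (\<Prod>p\<in>Q. 1 + C * Tf p)"
        by (rule smooth_bound[where B = "\<lambda>p. 1 + C * Tf p", OF A0 A1 Am loc Qfin Qp F(2) Fp])
      also have "\<dots> \<le> exp (\<Sum>p\<in>Q. C * Tf p)"
        by (rule prod_le_exp_sum) (simp add: C0 T0)
      also have "(\<Sum>p\<in>Q. C * Tf p) = C * (\<Sum>p\<in>Q. Tf p)" by (simp add: sum_distrib_left)
      also have "(\<Sum>p\<in>Q. Tf p) \<le> S"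
        unfolding S_def using Tsum Qfin Qp by (intro finite_sum_le_infsum) (auto simp: T0)
      then have "exp (C * (\<Sum>p\<in>Q. Tf p)) \<le> exp (C * S)" using C0 by (simp add: mult_left_mono)
      finally show "sum A F \<le> exp (C * S)" .
    qed
  qed (simp add: A0)
  show ?thesis
    by (rule summable_on_cong[THEN iffD1, OF _ Asum]) (simp add: A_def norm_div_powr \<sigma>_def)
qed




lemma dirichlet_mult:
  fixes a b :: "nat \<Rightarrow> complex" and s :: complex
  assumes sa: "(\<lambda>n. norm (a n / of_nat n powr s)) summable_on {1..}"
    and sb: "(\<lambda>n. norm (b n / of_nat n powr s)) summable_on {1..}"
  shows "(\<Sum>\<^sub>\<infinity>n\<in>{1..}. dconv a b n / of_nat n powr s) =
         (\<Sum>\<^sub>\<infinity>n\<in>{1..}. a n / of_nat n powr s) * (\<Sum>\<^sub>\<infinity>n\<in>{1..}. b n / of_nat n powr s)"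
proof -
  define a' where "a' = (\<lambda>n. a n / of_nat n powr s)"
  define b' where "b' = (\<lambda>n. b n / of_nat n powr s)"
  define I where "I = ({1..} :: nat set)"
  define P where "P = (\<lambda>(d, e). a' d * b' e)"
  have sa': "(\<lambda>n. norm (a' n)) summable_on I" using sa by (simp add: a'_def I_def)
  have sb': "(\<lambda>n. norm (b' n)) summable_on I" using sb by (simp add: b'_def I_def)
  have Pabs: "(\<lambda>z. norm (P z)) summable_on I \<times> I"
  proof (rule nonneg_bdd_above_summable_on)
    show "bdd_above (sum (\<lambda>z. norm (P z)) ` {F. F \<subseteq> I \<times> I \<and> finite F})"
    proof (rule bdd_aboveI2)
      fix F assume "F \<in> {F. F \<subseteq> I \<times> I \<and> finite F}"
      then have F: "F \<subseteq> I \<times> I" "finite F" by auto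
      have "sum (\<lambda>z. norm (P z)) F \<le> sum (\<lambda>z. norm (P z)) (fst ` F \<times> snd ` F)"
        using F by (intro sum_mono2) (auto simp: rev_image_eqI)
      also have "\<dots> = (\<Sum>d\<in>fst ` F. norm (a' d)) * (\<Sum>e\<in>snd ` F. norm (b' e))"
        by (simp add: P_def norm_mult sum_product sum.cartesian_product case_prod_unfold)
      also have "\<dots> \<le> (\<Sum>\<^sub>\<infinity>d\<in>I. norm (a' d)) * (\<Sum>\<^sub>\<infinity>e\<in>I. norm (b' e))"
      proof (rule mult_mono)
        show "(\<Sum>d\<in>fst ` F. norm (a' d)) \<le> (\<Sum>\<^sub>\<infinity>d\<in>I. norm (a' d))"
          using F sa' by (intro finite_sum_le_infsum) auto
        show "(\<Sum>e\<in>snd ` F. norm (b' e)) \<le> (\<Sum>\<^sub>\<infinity>e\<in>I. norm (b' e))"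
          using F sb' by (intro finite_sum_le_infsum) auto
        show "0 \<le> (\<Sum>\<^sub>\<infinity>d\<in>I. norm (a' d))" by (simp add: infsum_nonneg)
        show "0 \<le> (\<Sum>e\<in>snd ` F. norm (b' e))" by (simp add: sum_nonneg)
      qed
      finally show "sum (\<lambda>z. norm (P z)) F \<le> (\<Sum>\<^sub>\<infinity>d\<in>I. norm (a' d)) * (\<Sum>\<^sub>\<infinity>e\<in>I. norm (b' e))" .
    qed
  qed auto
  have Psum: "P summable_on I \<times> I" using Pabs by (rule abs_summable_summable)
  have prod: "infsum P (I \<times> I) = infsum a' I * infsum b' I"
  proof -
    have "infsum P (I \<times> I) = (\<Sum>\<^sub>\<infinity>d\<in>I. \<Sum>\<^sub>\<infinity>e\<in>I. a' d * b' e)"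
      using infsum_Sigma'_banach[of "\<lambda>d e. a' d * b' e" I "\<lambda>_. I"] Psum
      by (simp add: P_def)
    also have "\<dots> = (\<Sum>\<^sub>\<infinity>d\<in>I. a' d * infsum b' I)" by (simp add: infsum_cmult_right')
    also have "\<dots> = infsum a' I * infsum b' I" by (simp add: infsum_cmult_left')
    finally show ?thesis .
  qed
  define S where "S = Sigma I (\<lambda>n. {d. d dvd n})"
  define \<psi> where "\<psi> = (\<lambda>(n::nat, d::nat). (d, n div d))"
  have bij: "bij_betw \<psi> S (I \<times> I)"
  proof (rule bij_betw_byWitness[where f' = "\<lambda>(d, e). (d * e, d)"])
    show "\<forall>z\<in>S. (\<lambda>(d, e). (d * e, d)) (\<psi> z) = z"
      by (auto simp: S_def \<psi>_def)
    show "\<forall>z\<in>I \<times> I. \<psi> ((\<lambda>(d, e). (d * e, d)) z) = z"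
      by (auto simp: I_def \<psi>_def)
    show "\<psi> ` S \<subseteq> I \<times> I"
    proof
      fix z assume "z \<in> \<psi> ` S"
      then obtain n d where nd: "d dvd n" "n \<ge> 1" "z = (d, n div d)"
        by (auto simp: S_def I_def \<psi>_def)
      then have "d > 0" "n div d > 0" by (auto elim!: dvdE)
      then show "z \<in> I \<times> I" using nd by (simp add: I_def)
    qed
    show "(\<lambda>(d, e). (d * e, d)) ` (I \<times> I) \<subseteq> S"
      by (auto simp: S_def I_def)
  qed
  have PS: "(\<lambda>z. P (\<psi> z)) = (\<lambda>(n, d). a' d * b' (n div d))"
    by (auto simp: P_def \<psi>_def)
  have SumS: "(\<lambda>(n, d). a' d * b' (n div d)) summable_on S"
    using summable_on_reindex_bij_betw[OF bij, of P] Psum PS by simp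
  have "infsum (\<lambda>(n, d). a' d * b' (n div d)) S = infsum P (I \<times> I)"
    using infsum_reindex_bij_betw[OF bij, of P] PS by simp
  moreover have "infsum (\<lambda>(n, d). a' d * b' (n div d)) S =
       (\<Sum>\<^sub>\<infinity>n\<in>I. infsum (\<lambda>d. a' d * b' (n div d)) {d. d dvd n})"
    using infsum_Sigma'_banach[of "\<lambda>n d. a' d * b' (n div d)" I "\<lambda>n. {d. d dvd n}"] SumS
    by (simp add: S_def)
  moreover have "(\<Sum>\<^sub>\<infinity>n\<in>I. infsum (\<lambda>d. a' d * b' (n div d)) {d. d dvd n}) =
                 (\<Sum>\<^sub>\<infinity>n\<in>I. dconv a b n / of_nat n powr s)"
  proof (rule infsum_cong)
    fix n assume n: "n \<in> I"
    then have n0: "n > 0" by (simp add: I_def)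
    have "infsum (\<lambda>d. a' d * b' (n div d)) {d. d dvd n} = (\<Sum>d | d dvd n. a' d * b' (n div d))"
      using n0 by (simp add: finite_divisors_nat)
    also have "\<dots> = (\<Sum>d | d dvd n. a d * b (n div d) / of_nat n powr s)"
    proof (rule sum.cong[OF refl])
      fix d assume "d \<in> {d. d dvd n}"
      then have "n = d * (n div d)" by simp
      then have "(of_nat n :: complex) = of_nat d * of_nat (n div d)" by (metis of_nat_mult)
      then have "of_nat n powr s = of_nat d powr s * of_nat (n div d) powr s"
        by (simp add: powr_times_real)
      then show "a' d * b' (n div d) = a d * b (n div d) / of_nat n powr s"
        by (simp add: a'_def b'_def)
    qed
    also have "\<dots> = dconv a b n / of_nat n powr s"
      by (simp add: dconv_def sum_divide_distrib)
    finally show "infsum (\<lambda>d. a' d * b' (n div d)) {d. d dvd n} = dconv a b n / of_nat n powr s" .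
  qed
  ultimately show ?thesis using prod by (simp add: I_def a'_def b'_def)
qed




lemma pointwise_T:
  fixes f g :: "nat \<Rightarrow> complex" and \<beta> \<sigma> :: real
  assumes p: "prime p" and fb: "cmod (f p) \<le> 1" and gb: "cmod (g p) \<le> 1"
  shows "cmod (g p - f p) * real p powr - \<sigma> \<le> dist_term \<beta> f g p + real p powr (\<beta> - 2 * \<sigma>)"
proof -
  define P where "P = real p"
  define u where "u = cmod (g p - f p)"
  define R where "R = 1 - Re (f p * cnj (g p))"
  have P2: "P \<ge> 2" unfolding P_def using p prime_ge_2_nat by auto
  have u0: "u \<ge> 0" by (simp add: u_def)
  have fb2: "Re (f p) ^ 2 + Im (f p) ^ 2 \<le> 1"
    using fb by (metis cmod_power2 abs_norm_cancel norm_ge_zero power_le_one)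
  have gb2: "Re (g p) ^ 2 + Im (g p) ^ 2 \<le> 1"
    using gb by (metis cmod_power2 abs_norm_cancel norm_ge_zero power_le_one)
  have u2: "u ^ 2 \<le> 2 * R"
  proof -
    have "u ^ 2 = (Re (g p) - Re (f p)) ^ 2 + (Im (g p) - Im (f p)) ^ 2"
      by (simp add: u_def cmod_power2)
    moreover have "R = 1 - (Re (f p) * Re (g p) + Im (f p) * Im (g p))" by (simp add: R_def)
    ultimately show ?thesis using fb2 gb2 by (simp add: power2_eq_square algebra_simps)
  qed
  define A where "A = u * P powr (- \<beta> / 2)"
  define B where "B = P powr (\<beta> / 2 - \<sigma>)"
  have AB: "A * B = u * P powr - \<sigma>"
    by (simp add: A_def B_def mult.assoc powr_add[symmetric])
  have A2: "A ^ 2 = u ^ 2 / P powr \<beta>"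
  proof -
    have "A ^ 2 = u ^ 2 * (P powr (- \<beta> / 2) * P powr (- \<beta> / 2))"
      by (simp add: A_def power2_eq_square algebra_simps)
    also have "P powr (- \<beta> / 2) * P powr (- \<beta> / 2) = P powr (- \<beta>)"
      by (simp add: powr_add[symmetric])
    finally show ?thesis using P2 by (simp add: powr_minus divide_inverse)
  qed
  have B2: "B ^ 2 = P powr (\<beta> - 2 * \<sigma>)"
    by (simp add: B_def power2_eq_square powr_add[symmetric])
  have "A ^ 2 \<le> 2 * (R / P powr \<beta>)"
    unfolding A2 using u2 P2 by (simp add: divide_right_mono)
  moreover have "dist_term \<beta> f g p = R / P powr \<beta>" by (simp add: dist_term_def R_def P_def)
  moreover have "2 * (A * B) \<le> A ^ 2 + B ^ 2"
    using sum_squares_bound[of A B] by (simp add: power2_eq_square)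
  moreover have "B ^ 2 \<ge> 0" by simp
  ultimately have "A * B \<le> dist_term \<beta> f g p + B ^ 2" by linarith
  then show ?thesis unfolding AB B2 by (simp add: u_def P_def)
qed

lemma T_from_D:
  fixes f g :: "nat \<Rightarrow> complex" and \<beta> \<sigma> :: real
  assumes f_bd: "\<And>n. n \<ge> 1 \<Longrightarrow> norm (f n) \<le> 1"
      and g_bd: "\<And>n. n \<ge> 1 \<Longrightarrow> norm (g n) \<le> 1"
      and D_fin: "dist_term \<beta> f g summable_on {p. prime p}"
      and \<sigma>: "\<sigma> > (1 + \<beta>) / 2"
  shows "(\<lambda>p. cmod (g p - f p) * real p powr - \<sigma>) summable_on {p. prime p}"
proof (rule summable_on_comparison_test)
  have "summable (\<lambda>n. real n powr (\<beta> - 2 * \<sigma>))"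
    using \<sigma> by (simp add: summable_real_powr_iff)
  then have "summable (\<lambda>n. norm (real n powr (\<beta> - 2 * \<sigma>)))" by simp
  then have "(\<lambda>n. real n powr (\<beta> - 2 * \<sigma>)) summable_on UNIV"
    by (rule norm_summable_imp_summable_on)
  then have pw: "(\<lambda>n. real n powr (\<beta> - 2 * \<sigma>)) summable_on {p. prime p}"
    by (rule summable_on_subset_banach) simp
  show "(\<lambda>p. dist_term \<beta> f g p + real p powr (\<beta> - 2 * \<sigma>)) summable_on {p. prime p}"
    using D_fin pw by (rule summable_on_add)
  fix p :: nat assume "p \<in> {p. prime p}"
  then have p: "prime p" by simp
  then have p1: "p \<ge> 1" using prime_ge_1_nat by blast
  show "cmod (g p - f p) * real p powr - \<sigma> \<le> dist_term \<beta> f g p + real p powr (\<beta> - 2 * \<sigma>)"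
    using pointwise_T[where p=p and f=f and g=g and \<beta>=\<beta> and \<sigma>=\<sigma>] p f_bd[OF p1] g_bd[OF p1] by blast
  show "0 \<le> cmod (g p - f p) * real p powr - \<sigma>" by simp
qed

theorem lemma4:
  fixes f g h :: "nat \<Rightarrow> complex" and \<alpha> \<beta> :: real
  assumes f_cm: "completely_multiplicative f"
      and g_cm: "completely_multiplicative g"
      and f_bd: "\<And>n. n \<ge> 1 \<Longrightarrow> norm (f n) \<le> 1"
      and g_bd: "\<And>n. n \<ge> 1 \<Longrightarrow> norm (g n) \<le> 1"
      and S_f: "\<exists>\<xi> :: real \<Rightarrow> complex.
                  (\<forall>x\<ge>1. summatory f x = complex_of_real (x powr \<alpha>) * \<xi> x) \<and>
                  (\<forall>\<epsilon>>0. \<exists>C. \<forall>t\<ge>1. norm (\<xi> t) \<le> C * t powr \<epsilon>)"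
      and \<beta>_pos: "0 < \<beta>" and \<beta>_lt: "\<beta> < 2 * \<alpha> - 1"
      and D_fin: "dist_term \<beta> f g summable_on {p. prime p}"
      and h_def: "\<And>n. n \<ge> 1 \<Longrightarrow> g n = dconv f h n"
  shows "\<forall>s::complex. Re s > (1 + \<beta>) / 2 \<longrightarrow>
           ((\<lambda>n. h n / of_nat n powr s) summable_on {1..}) \<and>
           (\<Sum>\<^sub>\<infinity>n\<in>{1..}. h n / of_nat n powr s) \<noteq> 0"
proof (intro allI impI)
  fix s :: complex assume s: "Re s > (1 + \<beta>) / 2"
  have s0: "Re s > 0" using s \<beta>_pos by simp
  define H where "H = mkH (\<lambda>p. g p - f p) g"
  define K where "K = mkH (\<lambda>p. f p - g p) f"
  have f1: "f 1 = 1" using f_cm by (simp add: completely_multiplicative_def)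
  have hH: "h n = H n" if "n \<in> {1..}" for n
  proof (rule dconv_unique[of f h H n, OF f1])
    fix m :: nat assume m: "m > 0"
    then show "dconv f h m = dconv f H m"
      using h_def[of m] conv_fH[OF f_cm g_cm m] by (simp add: H_def)
  qed (use that in simp)
  have TH: "(\<lambda>p. cmod (g p - f p) * real p powr - Re s) summable_on {p. prime p}"
    by (rule T_from_D[OF f_bd g_bd D_fin s])
  have TK: "(\<lambda>p. cmod (f p - g p) * real p powr - Re s) summable_on {p. prime p}"
    using TH by (simp add: norm_minus_commute)
  have gbp: "cmod (g p) \<le> 1" if "prime p" for p using g_bd that prime_ge_1_nat by blast
  have fbp: "cmod (f p) \<le> 1" if "prime p" for p using f_bd that prime_ge_1_nat by blast
  have absH: "(\<lambda>n. norm (H n / of_nat n powr s)) summable_on {1..}"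
    unfolding H_def by (rule mkH_abs_summable[OF s0 gbp TH])
  have absK: "(\<lambda>n. norm (K n / of_nat n powr s)) summable_on {1..}"
    unfolding K_def by (rule mkH_abs_summable[OF s0 fbp TK])
  have sumH: "(\<lambda>n. H n / of_nat n powr s) summable_on {1..}"
    using absH by (rule abs_summable_summable)
  have sumh: "(\<lambda>n. h n / of_nat n powr s) summable_on {1..}"
    using sumH by (rule summable_on_cong[THEN iffD1, rotated]) (simp add: hH)
  have eqh: "(\<Sum>\<^sub>\<infinity>n\<in>{1..}. h n / of_nat n powr s) = (\<Sum>\<^sub>\<infinity>n\<in>{1..}. H n / of_nat n powr s)"
    by (rule infsum_cong) (simp add: hH)
  have "(\<Sum>\<^sub>\<infinity>n\<in>{1..}. dconv H K n / of_nat n powr s) =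
        (\<Sum>\<^sub>\<infinity>n\<in>{1..}. H n / of_nat n powr s) * (\<Sum>\<^sub>\<infinity>n\<in>{1..}. K n / of_nat n powr s)"
    by (rule dirichlet_mult[OF absH absK])
  moreover have "(\<Sum>\<^sub>\<infinity>n\<in>{1..}. dconv H K n / of_nat n powr s) = 1"
  proof -
    have "(\<Sum>\<^sub>\<infinity>n\<in>{1..}. dconv H K n / of_nat n powr s) =
          (\<Sum>\<^sub>\<infinity>n\<in>{1..}. delta n / of_nat n powr s)"
      by (rule infsum_cong) (simp add: H_def K_def conv_HK)
    also have "\<dots> = (\<Sum>\<^sub>\<infinity>n\<in>{1::nat}. delta n / of_nat n powr s)"
      by (rule infsum_cong_neutral) (auto simp: delta_def)
    also have "\<dots> = 1" by (simp add: delta_def)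
    finally show ?thesis .
  qed
  ultimately have "(\<Sum>\<^sub>\<infinity>n\<in>{1..}. H n / of_nat n powr s) \<noteq> 0" by auto
  then show "((\<lambda>n. h n / of_nat n powr s) summable_on {1..}) \<and>
             (\<Sum>\<^sub>\<infinity>n\<in>{1..}. h n / of_nat n powr s) \<noteq> 0"
    using sumh eqh by simp
qed


end
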